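(* Let $\rho$ be a positive integer and $v$ an integer with $v \ge 9\rho + 31$. Then \[ \beta(\rho,v,4) \le \frac{\rho v}{3} + 5\rho^2 - \frac{16\rho}{3}. \]
   Context: For integers $v \ge k \ge 2$, a $(v,k)$-packing is a pair $(X,\mathcal{B})$ where $X$ is a set of $v$ points and $\mathcal{B}$ is a set of $k$-subsets of $X$ (blocks) such that every pair of distinct points lies in at most one block. A partial parallel class (PPC) is a set of pairwise disjoint blocks; its size is the number of blocks. A PPC of size $\rho$ is maximum if the packing has no PPC of size $\rho+1$. $\beta(\rho,v,k)$ denotes the maximum number of blocks in a $(v,k)$-packing in which the maximum PPC has size $\rho$. *)

theory Defs
  imports Complex_Main
begin

definition packing :: "nat \<Rightarrow> nat \<Rightarrow> 'a set \<Rightarrow> 'a set set \<Rightarrow> bool" where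
  "packing v k X \<B> \<longleftrightarrow>
     2 \<le> k \<and> k \<le> v \<and> finite X \<and> card X = v \<and>
     (\<forall>b\<in>\<B>. b \<subseteq> X \<and> card b = k) \<and>
     (\<forall>x\<in>X. \<forall>y\<in>X. x \<noteq> y \<longrightarrow> card {b\<in>\<B>. x \<in> b \<and> y \<in> b} \<le> 1)"

definition ppc :: "'a set set \<Rightarrow> 'a set set \<Rightarrow> bool" where
  "ppc \<B> P \<longleftrightarrow> P \<subseteq> \<B> \<and> (\<forall>b\<in>P. \<forall>c\<in>P. b \<noteq> c \<longrightarrow> b \<inter> c = {})"

definition max_ppc_size :: "'a set set \<Rightarrow> nat \<Rightarrow> bool" where
  "max_ppc_size \<B> \<rho> \<longleftrightarrow>
     (\<exists>P. ppc \<B> P \<and> card P = \<rho>) \<and> \<not> (\<exists>P. ppc \<B> P \<and> card P = \<rho> + 1)"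

text \<open>beta(rho,v,k): the maximum number of blocks in a (v,k)-packing whose maximum
  PPC has size rho (points taken WLOG to be natural numbers; the set of values
  is bounded since blocks are subsets of a finite point set).\<close>
definition beta :: "nat \<Rightarrow> nat \<Rightarrow> nat \<Rightarrow> nat" where
  "beta \<rho> v k = Sup {card \<B> | (X :: nat set) \<B>. packing v k X \<B> \<and> max_ppc_size \<B> \<rho>}"

end

theory Submission imports Defs begin

lemma sum_swap_mem:
  assumes "finite A" "finite U"
  shows "(\<Sum>C\<in>A. \<Sum>x\<in>C \<inter> U. f C) = (\<Sum>x\<in>U. \<Sum>C\<in>{C\<in>A. x \<in> C}. (f C :: real))"
proof -
  have "(\<Sum>C\<in>A. \<Sum>x\<in>C \<inter> U. f C) = (\<Sum>C\<in>A. \<Sum>x\<in>U. if x \<in> C then f C else 0)"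
    by (rule sum.cong[OF refl]) (simp add: sum.If_cases[OF assms(2)] Int_commute)
  also have "\<dots> = (\<Sum>x\<in>U. \<Sum>C\<in>A. if x \<in> C then f C else 0)" by (rule sum.swap)
  also have "\<dots> = (\<Sum>x\<in>U. \<Sum>C\<in>{C\<in>A. x \<in> C}. f C)"
    by (rule sum.cong[OF refl]) (simp add: sum.inter_filter[OF assms(1)])
  finally show ?thesis .
qed

lemma sup_nat_le:
  fixes S :: "nat set"
  assumes "\<And>n. n \<in> S \<Longrightarrow> n \<le> K" "\<And>n. n \<in> S \<Longrightarrow> real n \<le> R" "0 \<le> R"
  shows "real (Sup S) \<le> R"
proof (cases "S = {}")
  case True then show ?thesis using assms by (simp add: Sup_nat_def)
next
  case False
  have "finite S" using assms(1) by (meson finite_atMost finite_subset subsetI atMost_iff)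
  then have "Sup S \<in> S" using False by (simp add: Sup_nat_def)
  then show ?thesis using assms(2) by blast
qed

lemma ineq1: "t \<in> {1,2,3,4::nat} \<Longrightarrow> 12 / real t \<le> 4 * real (4 - t) + real (t - 1)"
  by (elim insertE) auto

lemma ineq2: "t \<in> {1,2,3,4::nat} \<Longrightarrow> 1 / real t \<le> (if t = 1 then 1 else 0) + real (t - 1) / 2"
  by (elim insertE) auto

locale setting =
  fixes X :: "'a set" and B :: "'a set set" and v \<rho> :: nat and P :: "'a set set"
  assumes pk: "packing v 4 X B" and pP: "ppc B P" and cP: "card P = \<rho>"
    and noaug: "\<not> (\<exists>P'. ppc B P' \<and> card P' = \<rho> + 1)" and rho: "\<rho> \<ge> 1"
begin

definition U where "U = \<Union>P"
definition W where "W = X - U"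
definition S where "S x = {C\<in>B - P. x \<in> C}"
definition F where "F x = {C\<in>S x. C \<inter> U = {x}}"

lemma finX: "finite X" and cX: "card X = v" and blk: "\<And>b. b \<in> B \<Longrightarrow> b \<subseteq> X \<and> card b = 4"
  and pair: "\<And>x y. x \<in> X \<Longrightarrow> y \<in> X \<Longrightarrow> x \<noteq> y \<Longrightarrow> card {b\<in>B. x \<in> b \<and> y \<in> b} \<le> 1"
  using pk unfolding packing_def by auto

lemma finblk: "b \<in> B \<Longrightarrow> finite b"
  using blk card.infinite by fastforce

lemma finB: "finite B"
  by (rule finite_subset[of _ "Pow X"]) (use blk finX in auto)

lemma PB: "P \<subseteq> B" and Pdisj: "\<And>b c. b \<in> P \<Longrightarrow> c \<in> P \<Longrightarrow> b \<noteq> c \<Longrightarrow> b \<inter> c = {}"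
  using pP unfolding ppc_def by auto

lemma finP: "finite P" using finB PB finite_subset by blast

lemma two_blocks:
  assumes "C \<in> B" "D \<in> B" "C \<noteq> D" "x \<in> C" "x \<in> D" "y \<in> C" "y \<in> D"
  shows "x = y"
proof (rule ccontr)
  assume "x \<noteq> y"
  have "x \<in> X" "y \<in> X" using assms blk by auto
  then have "card {b\<in>B. x \<in> b \<and> y \<in> b} \<le> 1" using pair \<open>x \<noteq> y\<close> by blast
  moreover have "{C, D} \<subseteq> {b\<in>B. x \<in> b \<and> y \<in> b}" using assms by auto
  moreover have "finite {b\<in>B. x \<in> b \<and> y \<in> b}" using finB by simp
  ultimately have "card {C, D} \<le> 1" by (meson card_mono order_trans)
  with assms(3) show False by simp
qed

lemma finU: "finite U" unfolding U_def using finP PB blk finX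
  by (meson Sup_le_iff finite_subset subset_iff)
lemma UX: "U \<subseteq> X" unfolding U_def using PB blk by blast

lemma cardU: "card U = 4 * \<rho>"
proof -
  have "card U = sum card P" unfolding U_def
    by (rule card_Union_disjoint) (use Pdisj PB finblk in \<open>auto simp: pairwise_def disjnt_def\<close>)
  also have "\<dots> = sum (\<lambda>_. 4) P" using PB blk by (intro sum.cong) auto
  finally show ?thesis using cP by simp
qed

lemma cardW: "card W = v - 4 * \<rho>"
  unfolding W_def using card_Diff_subset[OF finU UX] cX cardU by simp

lemma meetU: "C \<in> B \<Longrightarrow> C \<inter> U \<noteq> {}"
proof (rule ccontr)
  assume C: "C \<in> B" and "\<not> C \<inter> U \<noteq> {}"
  then have e: "C \<inter> U = {}" by simp
  have cC: "card C = 4" using blk C by auto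
  then have "C \<noteq> {}" by auto
  then have "C \<notin> P" using e unfolding U_def by auto
  have "ppc B (insert C P)" unfolding ppc_def using C PB Pdisj e unfolding U_def by auto
  moreover have "card (insert C P) = \<rho> + 1" using \<open>C \<notin> P\<close> finP cP by simp
  ultimately show False using noaug by blast
qed

definition wt where "wt x = (\<Sum>C\<in>S x. 1 / real (card (C \<inter> U)))"

lemma finS: "finite (S x)" unfolding S_def using finB by simp

lemma SB: "C \<in> S x \<Longrightarrow> C \<in> B" unfolding S_def by auto

context
  fixes x b assumes xb: "x \<in> b" and bP: "b \<in> P"
begin

lemma Sb: assumes "C \<in> S x" shows "C \<inter> b = {x}"
proof -
  have "C \<in> B" "C \<noteq> b" "x \<in> C" using assms bP unfolding S_def by auto
  then show ?thesis using two_blocks[of C b x] bP PB xb by blast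
qed

lemma Sdisj: assumes "C \<in> S x" "D \<in> S x" "C \<noteq> D" shows "C \<inter> D = {x}"
proof -
  have "C \<in> B" "D \<in> B" "x \<in> C" "x \<in> D" using assms unfolding S_def by auto
  then show ?thesis using two_blocks[of C D x] assms(3) by blast
qed

lemma xU: "x \<in> U" unfolding U_def using xb bP by auto

lemma tC: assumes "C \<in> S x"
  shows "1 \<le> card (C \<inter> U)" "card (C \<inter> U) \<le> 4" "card (C \<inter> W) = 4 - card (C \<inter> U)"
    "card (C \<inter> U - {x}) = card (C \<inter> U) - 1"
proof -
  have C: "C \<in> B" "x \<in> C" using assms unfolding S_def by auto
  have fC: "finite C" using finblk C by simp
  have c4: "card C = 4" using blk C by simp
  show "1 \<le> card (C \<inter> U)" using C xU fC by (metis IntI card_0_eq empty_iff finite_Int less_one not_le)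
  show "card (C \<inter> U) \<le> 4" using c4 fC by (metis Int_lower1 card_mono)
  have "C \<inter> W = C - (C \<inter> U)" unfolding W_def using blk C by auto
  then show "card (C \<inter> W) = 4 - card (C \<inter> U)" using c4 fC by (simp add: card_Diff_subset)
  show "card (C \<inter> U - {x}) = card (C \<inter> U) - 1" using C xU by simp
qed

lemma sumW: "(\<Sum>C\<in>S x. card (C \<inter> W)) \<le> card W"
proof -
  have "(\<Sum>C\<in>S x. card (C \<inter> W)) = card (\<Union>C\<in>S x. C \<inter> W)"
  proof (rule card_UN_disjoint[symmetric])
    show "finite (S x)" by (rule finS)
    show "\<forall>C\<in>S x. finite (C \<inter> W)" using finblk SB by blast
    show "\<forall>C\<in>S x. \<forall>D\<in>S x. C \<noteq> D \<longrightarrow> C \<inter> W \<inter> (D \<inter> W) = {}"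
    proof (intro ballI impI)
      fix C D assume "C \<in> S x" "D \<in> S x" "C \<noteq> D"
      then have "C \<inter> D = {x}" by (rule Sdisj)
      then show "C \<inter> W \<inter> (D \<inter> W) = {}" using xU unfolding W_def by auto
    qed
  qed
  also have "\<dots> \<le> card W" by (rule card_mono) (simp add: W_def finX, blast)
  finally show ?thesis .
qed

lemma cardb: "card b = 4" using bP PB blk by auto

lemma sumU: "(\<Sum>C\<in>S x. card (C \<inter> U - {x})) \<le> 4 * \<rho> - 4"
proof -
  have "(\<Sum>C\<in>S x. card (C \<inter> U - {x})) = card (\<Union>C\<in>S x. C \<inter> U - {x})"
  proof (rule card_UN_disjoint[symmetric])
    show "finite (S x)" by (rule finS)
    show "\<forall>C\<in>S x. finite (C \<inter> U - {x})" using finblk SB by blast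
    show "\<forall>C\<in>S x. \<forall>D\<in>S x. C \<noteq> D \<longrightarrow> (C \<inter> U - {x}) \<inter> (D \<inter> U - {x}) = {}"
    proof (intro ballI impI)
      fix C D assume "C \<in> S x" "D \<in> S x" "C \<noteq> D"
      then have "C \<inter> D = {x}" by (rule Sdisj)
      then show "(C \<inter> U - {x}) \<inter> (D \<inter> U - {x}) = {}" by auto
    qed
  qed
  also have "\<dots> \<le> card (U - b)"
  proof (rule card_mono)
    show "finite (U - b)" using finU by simp
    show "(\<Union>C\<in>S x. C \<inter> U - {x}) \<subseteq> U - b"
    proof
      fix y assume "y \<in> (\<Union>C\<in>S x. C \<inter> U - {x})"
      then obtain C where C: "C \<in> S x" "y \<in> C" "y \<in> U" "y \<noteq> x" by auto
      have "C \<inter> b = {x}" using C(1) by (rule Sb)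
      then show "y \<in> U - b" using C by auto
    qed
  qed
  also have "\<dots> = 4 * \<rho> - 4"
  proof -
    have "b \<subseteq> U" unfolding U_def using bP by auto
    moreover have "finite b" using finblk bP PB by auto
    ultimately show ?thesis using card_Diff_subset[of b U] cardU cardb by simp
  qed
  finally show ?thesis .
qed

lemma heavy: "3 * wt x \<le> real (card W) + (real \<rho> - 1)"
proof -
  have "12 * wt x = (\<Sum>C\<in>S x. 12 / real (card (C \<inter> U)))"
    unfolding wt_def by (simp add: sum_distrib_left)
  also have "\<dots> \<le> (\<Sum>C\<in>S x. 4 * real (card (C \<inter> W)) + real (card (C \<inter> U - {x})))"
  proof (rule sum_mono)
    fix C assume C: "C \<in> S x"
    note t = tC[OF C]
    have "card (C \<inter> U) \<in> {1,2,3,4}" using t(1,2) by auto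
    then show "12 / real (card (C \<inter> U)) \<le> 4 * real (card (C \<inter> W)) + real (card (C \<inter> U - {x}))"
      unfolding t(3,4) by (rule ineq1)
  qed
  also have "\<dots> = 4 * real (\<Sum>C\<in>S x. card (C \<inter> W)) + real (\<Sum>C\<in>S x. card (C \<inter> U - {x}))"
    by (simp add: sum.distrib sum_distrib_left)
  also have "\<dots> \<le> 4 * real (card W) + real (4 * \<rho> - 4)"
  proof -
    have "real (\<Sum>C\<in>S x. card (C \<inter> W)) \<le> real (card W)" using sumW by (simp only: of_nat_le_iff)
    moreover have "real (\<Sum>C\<in>S x. card (C \<inter> U - {x})) \<le> real (4 * \<rho> - 4)" using sumU by (simp only: of_nat_le_iff)
    ultimately show ?thesis by linarith
  qed
  finally show ?thesis using rho by (simp add: of_nat_diff)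
qed

lemma general: "wt x \<le> real (card (F x)) + 2 * (real \<rho> - 1)"
proof -
  have "wt x \<le> (\<Sum>C\<in>S x. (if C \<in> F x then 1 else 0) + real (card (C \<inter> U - {x})) / 2)"
    unfolding wt_def
  proof (rule sum_mono)
    fix C assume C: "C \<in> S x"
    note t = tC[OF C]
    have "x \<in> C" using C unfolding S_def by auto
    then have xCU: "x \<in> C \<inter> U" using xU by simp
    have "card (C \<inter> U) = 1 \<longleftrightarrow> C \<inter> U = {x}"
    proof
      assume "card (C \<inter> U) = 1"
      then obtain z where "C \<inter> U = {z}" by (auto simp: card_1_singleton_iff)
      with xCU show "C \<inter> U = {x}" by auto
    next
      assume "C \<inter> U = {x}" then show "card (C \<inter> U) = 1" by simp
    qed
    then have FC: "C \<in> F x \<longleftrightarrow> card (C \<inter> U) = 1" using C unfolding F_def by auto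
    have "card (C \<inter> U) \<in> {1,2,3,4}" using t(1,2) by auto
    then show "1 / real (card (C \<inter> U)) \<le> (if C \<in> F x then 1 else 0) + real (card (C \<inter> U - {x})) / 2"
      unfolding t(4) FC by (rule ineq2)
  qed
  also have "\<dots> = real (card (F x)) + real (\<Sum>C\<in>S x. card (C \<inter> U - {x})) / 2"
    using finS by (simp add: sum.distrib sum_divide_distrib sum.If_cases F_def Int_absorb1 Collect_conj_eq Int_commute)
  also have "\<dots> \<le> real (card (F x)) + real (4 * \<rho> - 4) / 2"
  proof -
    have "real (\<Sum>C\<in>S x. card (C \<inter> U - {x})) \<le> real (4 * \<rho> - 4)" using sumU by (simp only: of_nat_le_iff)
    then show ?thesis by linarith
  qed
  finally have h: "wt x \<le> real (card (F x)) + real (4 * \<rho> - 4) / 2" .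
  have "real (4 * \<rho> - 4) = 4 * real \<rho> - 4" using rho by (simp add: of_nat_diff)
  with h show ?thesis by (simp add: field_simps)
qed

end

lemma Fsub: "F x \<subseteq> S x" unfolding F_def by auto

lemma aug:
  assumes bP: "b \<in> P" and xb: "x \<in> b" and yb: "y \<in> b" and xy: "x \<noteq> y"
    and F4: "card (F x) \<ge> 4" and DF: "D \<in> F y"
  shows False
proof -
  have D: "D \<in> B" "D \<notin> P" "y \<in> D" "D \<inter> U = {y}" using DF unfolding F_def S_def by auto
  have xU: "x \<in> U" using xb bP unfolding U_def by auto
  have xD: "x \<notin> D" using D(4) xU xy by auto
  define M where "M = {C\<in>F x. C \<inter> D \<noteq> {}}"
  define g where "g C = (SOME z. z \<in> C \<inter> D)" for C
  have gM: "g C \<in> C \<inter> D" if "C \<in> M" for C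
  proof -
    have "\<exists>z. z \<in> C \<inter> D" using that unfolding M_def by auto
    then show ?thesis unfolding g_def by (rule someI_ex)
  qed
  have "inj_on g M"
  proof (rule inj_onI)
    fix C1 C2 assume C: "C1 \<in> M" "C2 \<in> M" "g C1 = g C2"
    show "C1 = C2"
    proof (rule ccontr)
      assume ne: "C1 \<noteq> C2"
      have "C1 \<in> S x" "C2 \<in> S x" using C Fsub unfolding M_def by auto
      then have "C1 \<inter> C2 = {x}" using Sdisj[OF xb bP] ne by blast
      moreover have "g C1 \<in> C1 \<inter> C2 \<inter> D" using gM[OF C(1)] gM[OF C(2)] C(3) by auto
      ultimately show False using xD by auto
    qed
  qed
  moreover have "g ` M \<subseteq> D - {y}"
  proof
    fix z assume "z \<in> g ` M"
    then obtain C where C: "C \<in> M" "z = g C" by auto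
    have "C \<inter> U = {x}" using C(1) unfolding M_def F_def by auto
    then have "y \<notin> C" using yb bP xy unfolding U_def by auto
    then show "z \<in> D - {y}" using gM[OF C(1)] C(2) by auto
  qed
  moreover have "card (D - {y}) = 3"
  proof -
    have "card D = 4" using blk D(1) by auto
    then show ?thesis using D(3) finblk[OF D(1)] by simp
  qed
  moreover have "finite (D - {y})" using D finblk by simp
  ultimately have cM: "card M \<le> 3"
    by (metis card_image card_mono)
  have finF: "finite (F x)" using Fsub finS finite_subset by blast
  have "M \<subseteq> F x" unfolding M_def by auto
  then have "card (F x - M) \<ge> 1" using card_Diff_subset[OF finite_subset[OF \<open>M \<subseteq> F x\<close> finF] \<open>M \<subseteq> F x\<close>] cM F4 by simp
  then have "F x - M \<noteq> {}" by (intro notI) simp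
  then obtain C where "C \<in> F x - M" by blast
  then have C: "C \<in> F x" "C \<inter> D = {}" unfolding M_def by auto
  have C': "C \<in> B" "C \<notin> P" "x \<in> C" "C \<inter> U = {x}" using C(1) unfolding F_def S_def by auto
  define P' where "P' = insert C (insert D (P - {b}))"
  have "ppc B P'" unfolding ppc_def
  proof (intro conjI ballI impI)
    show "P' \<subseteq> B" unfolding P'_def using C' D PB by auto
    fix b1 b2 assume b12: "b1 \<in> P'" "b2 \<in> P'" "b1 \<noteq> b2"
    have other: "E \<inter> c = {}" if "E \<inter> U = {z}" "z \<in> b" "c \<in> P - {b}" for E z c
    proof -
      have "c \<subseteq> U" using that(3) unfolding U_def by auto
      moreover have "z \<notin> c" using that(2,3) Pdisj bP by blast
      ultimately have "E \<inter> c \<subseteq> {z}" using that(1) by blast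
      then show ?thesis using \<open>z \<notin> c\<close> by auto
    qed
    have Cc: "\<And>c. c \<in> P - {b} \<Longrightarrow> C \<inter> c = {}" using other[OF C'(4) xb] by blast
    have Dc: "\<And>c. c \<in> P - {b} \<Longrightarrow> D \<inter> c = {}" using other[OF D(4) yb] by blast
    have Cc': "\<And>c. c \<in> P - {b} \<Longrightarrow> c \<inter> C = {}" using Cc by (simp add: Int_commute)
    have Dc': "\<And>c. c \<in> P - {b} \<Longrightarrow> c \<inter> D = {}" using Dc by (simp add: Int_commute)
    have CD': "D \<inter> C = {}" using C(2) by (simp add: Int_commute)
    from b12(1) have "b1 = C \<or> b1 = D \<or> b1 \<in> P - {b}" unfolding P'_def by auto
    moreover from b12(2) have "b2 = C \<or> b2 = D \<or> b2 \<in> P - {b}" unfolding P'_def by auto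
    ultimately show "b1 \<inter> b2 = {}"
      using b12(3) Cc Dc Cc' Dc' C(2) CD' Pdisj by (elim disjE) auto
  qed
  moreover have "card P' = \<rho> + 1"
  proof -
    have "C \<noteq> D" using C(2) C'(3) by auto
    moreover have "card (P - {b}) = \<rho> - 1" using cP bP finP by simp
    ultimately show ?thesis unfolding P'_def using C' D finP rho by simp
  qed
  ultimately show False using noaug by blast
qed

lemma block_bound:
  assumes bP: "b \<in> P" and Wb: "card W \<ge> 5 * \<rho> + 31"
  shows "(\<Sum>x\<in>b. wt x) \<le> (real (card W) + real \<rho> - 1) / 3 + 6 * (real \<rho> - 1)"
proof -
  have finb: "finite b" and cb: "card b = 4" using bP PB finblk blk by auto
  show ?thesis
  proof (cases "\<exists>x\<in>b. card (F x) \<ge> 4")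
    case True
    then obtain x where x: "x \<in> b" "card (F x) \<ge> 4" by blast
    have "\<And>y. y \<in> b - {x} \<Longrightarrow> F y = {}" using aug[OF bP x(1) _ _ x(2)] by blast
    then have "\<And>y. y \<in> b - {x} \<Longrightarrow> wt y \<le> 2 * (real \<rho> - 1)"
      using general[OF _ bP] by fastforce
    then have "(\<Sum>y\<in>b - {x}. wt y) \<le> (\<Sum>y\<in>b - {x}. 2 * (real \<rho> - 1))" by (rule sum_mono)
    also have "\<dots> = 3 * (2 * (real \<rho> - 1))" using cb x(1) finb by simp
    finally have o: "(\<Sum>y\<in>b - {x}. wt y) \<le> 6 * (real \<rho> - 1)" by simp
    have "(\<Sum>y\<in>b. wt y) = wt x + (\<Sum>y\<in>b - {x}. wt y)" using finb x(1) by (simp add: sum.remove)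
    moreover have "3 * wt x \<le> real (card W) + (real \<rho> - 1)" by (rule heavy[OF x(1) bP])
    ultimately have "wt x \<le> (real (card W) + real \<rho> - 1) / 3" by (simp add: field_simps)
    with o \<open>(\<Sum>y\<in>b. wt y) = wt x + (\<Sum>y\<in>b - {x}. wt y)\<close> show ?thesis by linarith
  next
    case False
    have "wt y \<le> 3 + 2 * (real \<rho> - 1)" if yb: "y \<in> b" for y
    proof -
      have "card (F y) \<le> 3" using False yb by auto
      then have "real (card (F y)) \<le> 3" by simp
      with general[OF yb bP] show ?thesis by linarith
    qed
    then have "(\<Sum>y\<in>b. wt y) \<le> (\<Sum>y\<in>b. 3 + 2 * (real \<rho> - 1))" by (rule sum_mono)
    also have "\<dots> = 4 * (3 + 2 * (real \<rho> - 1))" using cb by simp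
    finally have "(\<Sum>y\<in>b. wt y) \<le> 4 * (3 + 2 * (real \<rho> - 1))" .
    moreover have "real (card W) \<ge> 5 * real \<rho> + 31" using Wb by (metis of_nat_add of_nat_mult of_nat_numeral of_nat_le_iff)
    ultimately have h: "3 * (\<Sum>y\<in>b. wt y) \<le> real (card W) + real \<rho> - 1 + 18 * (real \<rho> - 1)"
      by (simp add: algebra_simps)
    have eq: "(real (card W) + real \<rho> - 1) / 3 + 6 * (real \<rho> - 1) = (real (card W) + real \<rho> - 1 + 18 * (real \<rho> - 1)) / 3"
      by (simp add: field_simps)
    show ?thesis unfolding eq using h by simp
  qed
qed

lemma main_bound:
  assumes v: "v \<ge> 9 * \<rho> + 31"
  shows "real (card B) \<le> real \<rho> * real v / 3 + 5 * (real \<rho>)^2 - 16 * real \<rho> / 3"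
proof -
  have cW: "card W = v - 4 * \<rho>" by (rule cardW)
  have Wb: "card W \<ge> 5 * \<rho> + 31" using cW v by simp
  have rW: "real (card W) = real v - 4 * real \<rho>" using cW v by (simp add: of_nat_diff)
  have finBP: "finite (B - P)" using finB by simp
  have "card B = card P + card (B - P)" using PB finB finP
    by (metis add.commute card_Diff_subset card_mono le_add_diff_inverse2)
  then have c1: "real (card B) = real \<rho> + real (card (B - P))" using cP by simp
  have "real (card (B - P)) = (\<Sum>C\<in>B - P. 1)" by simp
  also have "\<dots> = (\<Sum>C\<in>B - P. \<Sum>x\<in>C \<inter> U. 1 / real (card (C \<inter> U)))"
  proof (rule sum.cong[OF refl])
    fix C assume "C \<in> B - P"
    then have "C \<inter> U \<noteq> {}" "finite (C \<inter> U)" using meetU finblk by auto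
    then have "card (C \<inter> U) \<noteq> 0" by simp
    then show "1 = (\<Sum>x\<in>C \<inter> U. 1 / real (card (C \<inter> U)))" by simp
  qed
  also have "\<dots> = (\<Sum>x\<in>U. \<Sum>C\<in>{C\<in>B - P. x \<in> C}. 1 / real (card (C \<inter> U)))"
    by (rule sum_swap_mem[OF finBP finU])
  also have "\<dots> = (\<Sum>x\<in>U. wt x)" unfolding wt_def S_def by simp
  also have "\<dots> = (\<Sum>b\<in>P. \<Sum>x\<in>b. wt x)" unfolding U_def
    by (subst sum.Union_disjoint) (use finblk PB Pdisj in auto)
  also have "\<dots> \<le> (\<Sum>b\<in>P. (real (card W) + real \<rho> - 1) / 3 + 6 * (real \<rho> - 1))"
    by (rule sum_mono) (rule block_bound[OF _ Wb])
  also have "\<dots> = real \<rho> * ((real (card W) + real \<rho> - 1) / 3 + 6 * (real \<rho> - 1))" using cP by simp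
  finally have "real (card B) \<le> real \<rho> + real \<rho> * ((real v - 4 * real \<rho> + real \<rho> - 1) / 3 + 6 * (real \<rho> - 1))"
    using c1 rW by simp
  also have "\<dots> = real \<rho> * real v / 3 + 5 * (real \<rho>)^2 - 16 * real \<rho> / 3"
    by (simp add: field_simps power2_eq_square)
  finally show ?thesis .
qed

end

lemma sup_nat_le2:
  fixes S :: "nat set"
  assumes "\<And>n. n \<in> S \<Longrightarrow> n \<le> K" "\<And>n. n \<in> S \<Longrightarrow> real n \<le> R" "0 \<le> R"
  shows "real (Sup S) \<le> R" using sup_nat_le assms by blast

theorem theorem3p12:
  fixes \<rho> v :: nat
  assumes "\<rho> \<ge> 1" and "v \<ge> 9 * \<rho> + 31"
  shows "real (beta \<rho> v 4) \<le> real \<rho> * real v / 3 + 5 * (real \<rho>)^2 - 16 * real \<rho> / 3"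
  unfolding beta_def
proof (rule sup_nat_le)
  fix n assume "n \<in> {card \<B> | (X :: nat set) \<B>. packing v 4 X \<B> \<and> max_ppc_size \<B> \<rho>}"
  then obtain X :: "nat set" and B where n: "n = card B" and pk: "packing v 4 X B" and mx: "max_ppc_size B \<rho>"
    by blast
  obtain P where P: "ppc B P" "card P = \<rho>" using mx unfolding max_ppc_size_def by blast
  interpret setting X B v \<rho> P
    by unfold_locales (use pk P mx assms(1) in \<open>auto simp: max_ppc_size_def\<close>)
  show "real n \<le> real \<rho> * real v / 3 + 5 * (real \<rho>)^2 - 16 * real \<rho> / 3"
    using main_bound[OF assms(2)] n by simp
  have "B \<subseteq> Pow X" using blk by auto
  then have "card B \<le> card (Pow X)" using finX by (simp add: card_mono)
  then show "n \<le> 2 ^ v" using n finX cX by (simp add: card_Pow)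
next
  have "real \<rho> * real v / 3 \<ge> 16 * real \<rho> / 3"
    using assms by (intro divide_right_mono mult_left_mono) auto
  moreover have "0 \<le> 5 * (real \<rho>)^2" by simp
  ultimately show "0 \<le> real \<rho> * real v / 3 + 5 * (real \<rho>)^2 - 16 * real \<rho> / 3" by linarith
qed

end
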